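(* Let $R$ be a ring. The following are equivalent: (a) $R$ satisfies the irreducible intersection property. (b) For every ideal $I\subsetneq R$ such that $\Sigma=\{p\in\mathrm{Spec}(R): p\subset I\}$ is nonempty, $\Sigma$ has a unique maximal element with respect to inclusion. (c) For all distinct prime ideals $p_1,p_2$ of $R$ with $p_1+p_2\neq R$, the set $\{p\in\mathrm{Spec}(R): p\subset p_1+p_2\}$ has a unique maximal element with respect to inclusion.
   Context: All rings are commutative with $1$. A ring $R$ satisfies the irreducible intersection property if for any prime ideals $p_1,p_2\subset R$, either $p_1+p_2=R$ or $p_1+p_2$ is a prime ideal. *)

theory Defs
  imports "HOL-Algebra.Algebra"
begin

definition Spec :: "('a, 'b) ring_scheme \<Rightarrow> 'a set set" where
  "Spec R = {p. primeideal p R}"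

definition irreducible_intersection_property :: "('a, 'b) ring_scheme \<Rightarrow> bool" where
  "irreducible_intersection_property R \<longleftrightarrow>
     (\<forall>p1 p2. primeideal p1 R \<longrightarrow> primeideal p2 R \<longrightarrow>
        p1 <+>\<^bsub>R\<^esub> p2 = carrier R \<or> primeideal (p1 <+>\<^bsub>R\<^esub> p2) R)"

definition has_unique_maximal :: "'a set set \<Rightarrow> bool" where
  "has_unique_maximal S \<longleftrightarrow> (\<exists>!m. m \<in> S \<and> (\<forall>x\<in>S. m \<subseteq> x \<longrightarrow> x = m))"

end

theory Submission
  imports Defs
begin

lemma prime_union_chain:
  fixes R (structure)
  assumes R: "cring R" and C: "subset.chain {q. primeideal q R} C" and ne: "C \<noteq> {}"
  shows "primeideal (\<Union>C) R"
proof -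
  interpret cring R by fact
  have ch: "subset.chain {I. ideal I R} C"
    using C unfolding pred_on.chain_def by (auto dest: primeideal.axioms(1))
  have id: "ideal (\<Union>C) R" using chain_Union_is_ideal[OF ch] ne by simp
  have Cp: "\<And>q. q \<in> C \<Longrightarrow> primeideal q R" using C unfolding pred_on.chain_def by auto
  have "\<one> \<notin> \<Union>C"
  proof
    assume "\<one> \<in> \<Union>C"
    then obtain q where "q \<in> C" "\<one> \<in> q" by auto
    then have "primeideal q R" using Cp by auto
    then show False using \<open>\<one> \<in> q\<close>
      using ideal.one_imp_carrier[OF primeideal.axioms(1)] primeideal.I_notcarr by metis
  qed
  then have nc: "carrier R \<noteq> \<Union>C" by auto
  show ?thesis
  proof (rule primeidealI[OF id R nc])
    fix a b assume ab: "a \<in> carrier R" "b \<in> carrier R" "a \<otimes> b \<in> \<Union>C"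
    then obtain q where "q \<in> C" "a \<otimes> b \<in> q" by auto
    then have "a \<in> q \<or> b \<in> q" using Cp ab primeideal.I_prime by metis
    then show "a \<in> \<Union>C \<or> b \<in> \<Union>C" using \<open>q \<in> C\<close> by auto
  qed
qed

lemma exists_maximal_above:
  fixes R (structure)
  assumes R: "cring R" and p: "p \<in> Spec R" "p \<subseteq> I"
  shows "\<exists>M. M \<in> {q \<in> Spec R. q \<subseteq> I} \<and> p \<subseteq> M \<and> (\<forall>x\<in>{q \<in> Spec R. q \<subseteq> I}. M \<subseteq> x \<longrightarrow> x = M)"
proof -
  define A where "A = {q \<in> Spec R. q \<subseteq> I \<and> p \<subseteq> q}"
  have "\<exists>M\<in>A. \<forall>Y\<in>A. M \<subseteq> Y \<longrightarrow> Y = M"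
  proof (rule subset_Zorn_nonempty)
    show "A \<noteq> {}" using p A_def by auto
    fix C assume ne: "C \<noteq> {}" and ch: "subset.chain A C"
    have "subset.chain {q. primeideal q R} C"
      using ch unfolding pred_on.chain_def Spec_def A_def by auto
    then have "primeideal (\<Union>C) R" using prime_union_chain[OF R _ ne] by auto
    moreover have "\<Union>C \<subseteq> I" "p \<subseteq> \<Union>C" using ch ne unfolding pred_on.chain_def A_def by blast+
    ultimately show "\<Union>C \<in> A" unfolding Spec_def A_def by auto
  qed
  then obtain M where M: "M \<in> A" "\<forall>Y\<in>A. M \<subseteq> Y \<longrightarrow> Y = M" by blast
  show ?thesis
    apply (rule exI[of _ M])
    using M A_def by (metis (no_types, lifting) mem_Collect_eq subset_trans)
qed

lemma sum_props:
  fixes R (structure)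
  assumes R: "cring R" and "ideal I R" "ideal J R"
  shows "ideal (I <+>\<^bsub>R\<^esub> J) R" "I \<subseteq> I <+>\<^bsub>R\<^esub> J" "J \<subseteq> I <+>\<^bsub>R\<^esub> J"
    "\<And>K. ideal K R \<Longrightarrow> I \<subseteq> K \<Longrightarrow> J \<subseteq> K \<Longrightarrow> I <+>\<^bsub>R\<^esub> J \<subseteq> K"
proof -
  interpret cring R by fact
  have e: "Idl (I \<union> J) = I <+>\<^bsub>R\<^esub> J" using union_genideal assms by auto
  have sub: "I \<union> J \<subseteq> carrier R" using assms by (auto dest: ideal.Icarr)
  show "ideal (I <+>\<^bsub>R\<^esub> J) R" using add_ideals assms by auto
  show "I \<subseteq> I <+>\<^bsub>R\<^esub> J" "J \<subseteq> I <+>\<^bsub>R\<^esub> J" using genideal_self[OF sub] e by auto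
  fix K assume "ideal K R" "I \<subseteq> K" "J \<subseteq> K"
  then show "I <+>\<^bsub>R\<^esub> J \<subseteq> K" using genideal_minimal[of K "I \<union> J"] e by auto
qed

theorem mainTheorem8:
  fixes R (structure)
  assumes "cring R"
  shows "(irreducible_intersection_property R
           \<longleftrightarrow> (\<forall>I. ideal I R \<longrightarrow> I \<noteq> carrier R \<longrightarrow> {p \<in> Spec R. p \<subseteq> I} \<noteq> {} \<longrightarrow>
                  has_unique_maximal {p \<in> Spec R. p \<subseteq> I}))
       \<and> (irreducible_intersection_property R
           \<longleftrightarrow> (\<forall>p1 p2. p1 \<in> Spec R \<longrightarrow> p2 \<in> Spec R \<longrightarrow> p1 \<noteq> p2 \<longrightarrow> p1 <+> p2 \<noteq> carrier R \<longrightarrow>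
                  has_unique_maximal {p \<in> Spec R. p \<subseteq> p1 <+> p2}))"
proof -
  have pid: "\<And>p. p \<in> Spec R \<Longrightarrow> ideal p R" unfolding Spec_def by (auto dest: primeideal.axioms(1))
  have AB: "irreducible_intersection_property R \<Longrightarrow>
     (\<forall>I. ideal I R \<longrightarrow> I \<noteq> carrier R \<longrightarrow> {p \<in> Spec R. p \<subseteq> I} \<noteq> {} \<longrightarrow>
                  has_unique_maximal {p \<in> Spec R. p \<subseteq> I})"
  proof (intro allI impI)
    fix I assume iip: "irreducible_intersection_property R" and I: "ideal I R" "I \<noteq> carrier R"
      and ne: "{p \<in> Spec R. p \<subseteq> I} \<noteq> {}"
    then obtain p where "p \<in> Spec R" "p \<subseteq> I" by auto
    then obtain M where M: "M \<in> {q \<in> Spec R. q \<subseteq> I}" "\<forall>x\<in>{q \<in> Spec R. q \<subseteq> I}. M \<subseteq> x \<longrightarrow> x = M"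
      using exists_maximal_above[OF assms] by blast
    show "has_unique_maximal {p \<in> Spec R. p \<subseteq> I}"
      unfolding has_unique_maximal_def
    proof (rule ex1I[of _ M])
      show "M \<in> {p \<in> Spec R. p \<subseteq> I} \<and> (\<forall>x\<in>{p \<in> Spec R. p \<subseteq> I}. M \<subseteq> x \<longrightarrow> x = M)" using M by blast
      fix N assume N: "N \<in> {p \<in> Spec R. p \<subseteq> I} \<and> (\<forall>x\<in>{p \<in> Spec R. p \<subseteq> I}. N \<subseteq> x \<longrightarrow> x = N)"
      have iM: "ideal M R" "ideal N R" using M N pid by auto
      note sp = sum_props[OF assms iM]
      have "M <+>\<^bsub>R\<^esub> N \<subseteq> I" using sp(4)[OF I(1)] M N by auto
      then have "M <+>\<^bsub>R\<^esub> N \<noteq> carrier R" using I ideal.Icarr[OF I(1)] by blast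
      then have "primeideal (M <+>\<^bsub>R\<^esub> N) R" using iip M N
        unfolding irreducible_intersection_property_def Spec_def by auto
      then have S: "M <+>\<^bsub>R\<^esub> N \<in> {p \<in> Spec R. p \<subseteq> I}" using \<open>M <+>\<^bsub>R\<^esub> N \<subseteq> I\<close> unfolding Spec_def by auto
      have "M <+>\<^bsub>R\<^esub> N = M" using M(2) S sp(2) by blast
      moreover have "M <+>\<^bsub>R\<^esub> N = N" using N S sp(3) by blast
      ultimately show "N = M" by simp
    qed
  qed
  have BC: "(\<forall>I. ideal I R \<longrightarrow> I \<noteq> carrier R \<longrightarrow> {p \<in> Spec R. p \<subseteq> I} \<noteq> {} \<longrightarrow>
                  has_unique_maximal {p \<in> Spec R. p \<subseteq> I}) \<Longrightarrow>
       (\<forall>p1 p2. p1 \<in> Spec R \<longrightarrow> p2 \<in> Spec R \<longrightarrow> p1 \<noteq> p2 \<longrightarrow> p1 <+>\<^bsub>R\<^esub> p2 \<noteq> carrier R \<longrightarrow>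
                  has_unique_maximal {p \<in> Spec R. p \<subseteq> p1 <+>\<^bsub>R\<^esub> p2})"
  proof (intro allI impI)
    fix p1 p2 assume H: "\<forall>I. ideal I R \<longrightarrow> I \<noteq> carrier R \<longrightarrow> {p \<in> Spec R. p \<subseteq> I} \<noteq> {} \<longrightarrow>
                  has_unique_maximal {p \<in> Spec R. p \<subseteq> I}"
      and p: "p1 \<in> Spec R" "p2 \<in> Spec R" "p1 <+>\<^bsub>R\<^esub> p2 \<noteq> carrier R"
    note sp = sum_props[OF assms pid[OF p(1)] pid[OF p(2)]]
    have "p1 \<in> {p \<in> Spec R. p \<subseteq> p1 <+>\<^bsub>R\<^esub> p2}" using p sp by auto
    then show "has_unique_maximal {p \<in> Spec R. p \<subseteq> p1 <+>\<^bsub>R\<^esub> p2}" using H sp p by blast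
  qed
  have CA: "(\<forall>p1 p2. p1 \<in> Spec R \<longrightarrow> p2 \<in> Spec R \<longrightarrow> p1 \<noteq> p2 \<longrightarrow> p1 <+>\<^bsub>R\<^esub> p2 \<noteq> carrier R \<longrightarrow>
                  has_unique_maximal {p \<in> Spec R. p \<subseteq> p1 <+>\<^bsub>R\<^esub> p2}) \<Longrightarrow> irreducible_intersection_property R"
    unfolding irreducible_intersection_property_def
  proof (intro allI impI)
    fix p1 p2 assume H: "\<forall>p1 p2. p1 \<in> Spec R \<longrightarrow> p2 \<in> Spec R \<longrightarrow> p1 \<noteq> p2 \<longrightarrow> p1 <+>\<^bsub>R\<^esub> p2 \<noteq> carrier R \<longrightarrow>
                  has_unique_maximal {p \<in> Spec R. p \<subseteq> p1 <+>\<^bsub>R\<^esub> p2}"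
      and pp: "primeideal p1 R" "primeideal p2 R"
    have p: "p1 \<in> Spec R" "p2 \<in> Spec R" using pp unfolding Spec_def by auto
    note sp = sum_props[OF assms pid[OF p(1)] pid[OF p(2)]]
    show "p1 <+>\<^bsub>R\<^esub> p2 = carrier R \<or> primeideal (p1 <+>\<^bsub>R\<^esub> p2) R"
    proof (cases "p1 <+>\<^bsub>R\<^esub> p2 = carrier R")
      case True then show ?thesis by simp
    next
      case False
      show ?thesis
      proof (cases "p1 = p2")
        case True
        have "p1 <+>\<^bsub>R\<^esub> p2 \<subseteq> p1" using sp(4)[OF pid[OF p(1)]] True by auto
        then have "p1 <+>\<^bsub>R\<^esub> p2 = p1" using sp(2) by auto
        then show ?thesis using pp by simp
      next
        case ne: False
        let ?S = "{p \<in> Spec R. p \<subseteq> p1 <+>\<^bsub>R\<^esub> p2}"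
        have u: "has_unique_maximal ?S" using H p ne False by blast
        obtain M1 where M1: "M1 \<in> ?S" "p1 \<subseteq> M1" "\<forall>x\<in>?S. M1 \<subseteq> x \<longrightarrow> x = M1"
          using exists_maximal_above[OF assms p(1) sp(2)] by blast
        obtain M2 where M2: "M2 \<in> ?S" "p2 \<subseteq> M2" "\<forall>x\<in>?S. M2 \<subseteq> x \<longrightarrow> x = M2"
          using exists_maximal_above[OF assms p(2) sp(3)] by blast
        have "M1 = M2" using u M1 M2 unfolding has_unique_maximal_def by blast
        then have "p1 <+>\<^bsub>R\<^esub> p2 \<subseteq> M1" using sp(4)[OF pid] M1 M2 by auto
        then have "p1 <+>\<^bsub>R\<^esub> p2 = M1" using M1 by auto
        then show ?thesis using M1 unfolding Spec_def by auto
      qed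
    qed
  qed
  show ?thesis using AB BC CA by blast
qed

end
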